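(* Let $(r_k)_{k\in\mathbb N}$ be non-negative real numbers and let $A\in(0,1/2)$ and $B,C,D\ge0$ be constants such that for all $k$, \[r_{k+1}^2\le\Big(\big((1-A)r_k^2+B\big)^{1/2}+C\Big)^2+D.\] Then for all $k$, \[r_k\le\sqrt2\Big(1-\frac A2\Big)^k(r_0+\sqrt B)+\frac{2\sqrt2C}{A}+2\sqrt{\frac{D+B}{A}}.\] *)

theory Defs
  imports Complex_Main
begin

end

theory Submission
  imports Defs
begin

theorem lemma11:
  fixes r :: "nat \<Rightarrow> real" and A B C D :: real
  assumes nonneg: "\<And>k. r k \<ge> 0"
    and A: "0 < A" "A < 1/2"
    and B: "B \<ge> 0" and C: "C \<ge> 0" and D: "D \<ge> 0"
    and rec: "\<And>k. (r (Suc k))^2 \<le> (sqrt ((1 - A) * (r k)^2 + B) + C)^2 + D"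
  shows "\<And>k. r k \<le> sqrt 2 * (1 - A/2)^k * (r 0 + sqrt B) + 2 * sqrt 2 * C / A
                  + 2 * sqrt ((D + B) / A)"
proof -
  fix k
  define q where "q = 1 - A/2"
  define s where "s = sqrt ((D + B) / A)"
  define L where "L = 2 * sqrt 2 * C / A + 2 * s"
  have s0: "s \<ge> 0" unfolding s_def using A B D by simp
  have ss: "A * s^2 = D + B" unfolding s_def using A B D by simp
  have q34: "q \<ge> 3/4" "q \<le> 1" unfolding q_def using A by auto
  have sq2: "sqrt 2 \<ge> 1" by simp
  have CL: "C \<le> sqrt 2 * C" using C sq2 by (simp add: mult_right_mono[OF sq2 C, simplified])
  have AL: "A/2 * L = sqrt 2 * C + A * s" unfolding L_def using A by (simp add: field_simps)
  have ABD: "A*B + A*D \<ge> 0" using A B D by simp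
  have L2s: "L \<ge> 2 * s" unfolding L_def using A C by simp
  have main: "r n \<le> q^n * r 0 + L" for n
  proof (induction n)
    case 0 then show ?case using L2s s0 by simp
  next
    case (Suc n)
    define t where "t = q^n * r 0 + L"
    have qn: "q^n \<ge> 0" using q34 by simp
    have t2s: "t \<ge> 2 * s" unfolding t_def using L2s mult_nonneg_nonneg[OF qn nonneg[of 0]] by linarith
    have rt: "r n \<le> t" using Suc t_def by simp
    define m where "m = A * s / 2"
    have m0: "m \<ge> 0" unfolding m_def using A s0 by simp
    define u where "u = sqrt ((1 - A) * (r n)^2 + B)"
    have qt: "q * t \<ge> 3/2 * s" using q34 t2s s0
    proof -
      have "3/4 * (2*s) \<le> q * t" using q34 t2s s0 by (intro mult_mono) auto
      thus ?thesis by simp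
    qed
    have As: "A * s * s \<le> A * s * (q * t)"
      using qt A s0 by (intro mult_left_mono) auto
    have "(1 - A) * (r n)^2 \<le> (1 - A) * t^2"
      using rt nonneg[of n] A by (intro mult_left_mono power_mono) auto
    also have "\<dots> \<le> q^2 * t^2" unfolding q_def
      by (intro mult_right_mono) (auto simp: power2_eq_square algebra_simps)
    finally have "u^2 \<le> q^2 * t^2 + B" unfolding u_def using A nonneg[of n] B
      by (simp add: power2_eq_square)
    also have "\<dots> \<le> (q*t + m)^2"
    proof -
      have e: "(q*t + m)^2 = q^2*t^2 + A*s*(q*t) + m^2" unfolding m_def by (simp add: power2_eq_square algebra_simps)
      have "A*s*s = D+B" using ss by (simp add: power2_eq_square mult.assoc)
      hence "B \<le> A*s*(q*t)" using As D by linarith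
      moreover have "m^2 \<ge> 0" by simp
      ultimately show ?thesis unfolding e by linarith
    qed
    finally have u2: "u^2 \<le> (q*t + m)^2" .
    have "0 \<le> q*t + m" using m0 qt s0 by linarith
    with u2 have uq: "u \<le> q*t + m" by (rule power2_le_imp_le)
    have u0: "u \<ge> 0" unfolding u_def using A B by simp
    have "(r (Suc n))^2 \<le> (u + C)^2 + D" using rec[of n] unfolding u_def .
    also have "\<dots> \<le> (q*t + m + C)^2 + D" using uq u0 C by (intro add_right_mono power_mono) auto
    also have "\<dots> \<le> (q*t + 2*m + C)^2"
    proof -
      have e: "(q*t + 2*m + C)^2 = (q*t + m + C)^2 + m*(2*(q*t + m + C) + m)" by (simp add: power2_eq_square algebra_simps)
      have "A*s*s = D+B" using ss by (simp add: power2_eq_square mult.assoc)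
      hence "D \<le> A*s*(q*t)" using As B by linarith
      also have "A*s*(q*t) = m*(2*(q*t))" unfolding m_def by simp
      also have "\<dots> \<le> m*(2*(q*t + m + C) + m)" using m0 C qt s0 by (intro mult_left_mono) auto
      finally show ?thesis unfolding e by linarith
    qed
    finally have r2: "(r (Suc n))^2 \<le> (q*t + 2*m + C)^2" .
    have "0 \<le> q*t + 2*m + C" using m0 qt s0 C by linarith
    with r2 have "r (Suc n) \<le> q*t + 2*m + C" by (rule power2_le_imp_le)
    also have "\<dots> \<le> q*t + A/2 * L" using AL CL unfolding m_def by simp
    also have "\<dots> = q^(Suc n) * r 0 + L" unfolding t_def q_def by (simp add: algebra_simps)
    finally show ?case .
  qed
  have "r 0 \<le> sqrt 2 * (r 0 + sqrt B)"
  proof -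
    have "1 * r 0 \<le> sqrt 2 * r 0" by (rule mult_right_mono[OF sq2 nonneg[of 0]])
    moreover have "sqrt 2 * r 0 \<le> sqrt 2 * (r 0 + sqrt B)" using B by (intro mult_left_mono) auto
    ultimately show ?thesis by linarith
  qed
  hence "q^k * r 0 \<le> q^k * (sqrt 2 * (r 0 + sqrt B))"
    using q34 by (intro mult_left_mono) auto
  with main[of k] show "r k \<le> sqrt 2 * (1 - A/2)^k * (r 0 + sqrt B) + 2 * sqrt 2 * C / A
                  + 2 * sqrt ((D + B) / A)"
    unfolding q_def L_def s_def by (simp add: algebra_simps)
qed

end
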